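(* For every level $t \in \mathcal{L}$ there exists a unique finite set $\{u_1, \ldots, u_n\} \subseteq \mathcal{L}_s$ of pairwise incomparable sublevels (i.e. with $\max(u_1,\ldots,u_n) \in \mathcal{L}_r$) such that $t =_{\mathcal{L}} \max(u_1, \ldots, u_n)$.
   Context: $\operatorname{imax}\colon \mathbb{N}\times\mathbb{N}\to\mathbb{N}$ is defined by $\operatorname{imax}(i,0)=0$ and $\operatorname{imax}(i,j+1)=\max(i,j+1)$. Levels are terms of the grammar $t ::= x \mid 0 \mid s(t) \mid \max(t,t) \mid \operatorname{imax}(t,t)$, with $x$ in a countable set of variables $\mathcal{X}$; $\mathcal{L}$ is the set of levels. A valuation is $\sigma\colon\mathcal{X}\to\mathbb{N}$; values are $[0]_\sigma=0$, $[x]_\sigma=\sigma(x)$, $[s(t)]_\sigma=[t]_\sigma+1$, $[\max(t_1,t_2)]_\sigma=\max([t_1]_\sigma,[t_2]_\sigma)$, $[\operatorname{imax}(t_1,t_2)]_\sigma=\operatorname{imax}([t_1]_\sigma,[t_2]_\sigma)$. Sublevels: for finite $E\subseteq\mathcal{X}$, $x\in\mathcal{X}$, $S\in\mathbb{N}$, $[A(E,x,S)]_\sigma$ is $0$ if some $y\in E$ has $\sigma(y)=0$ and $\sigma(x)+S$ otherwise; $[B(E,S)]_\sigma$ is $0$ if some $y\in E$ has $\sigma(y)=0$ and $S$ otherwise. $\mathcal{L}_s$ is the set of sublevels $A(E,x,S)$ with $x\in E$ and $B(E,S)$ with $S>0$. $\max$ of a finite family is evaluated pointwise (empty max has value $0$).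 $t_1\leqslant_{\mathcal{L}} t_2$ (resp. $=_{\mathcal{L}}$) means $[t_1]_\sigma\le[t_2]_\sigma$ (resp. $=$) for every valuation $\sigma$. Sublevels $u,v$ are incomparable if neither $u\leqslant_{\mathcal{L}} v$ nor $v\leqslant_{\mathcal{L}} u$. $\mathcal{L}_r$ (minimal representations) is the set of formal expressions $\max(u_1,\ldots,u_n)$ with $\{u_1,\ldots,u_n\}$ a finite set of pairwise incomparable elements of $\mathcal{L}_s$. *)

theory Defs
  imports Main
begin

type_synonym var = nat
type_synonym valuation = "var \<Rightarrow> nat"

definition imax :: "nat \<Rightarrow> nat \<Rightarrow> nat" where
  "imax i j = (if j = 0 then 0 else max i j)"

datatype level = LVar var | LZero | LSucc level | LMax level level | LIMax level level

fun lval :: "level \<Rightarrow> valuation \<Rightarrow> nat" where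
  "lval (LVar x) \<sigma> = \<sigma> x"
| "lval LZero \<sigma> = 0"
| "lval (LSucc t) \<sigma> = lval t \<sigma> + 1"
| "lval (LMax t1 t2) \<sigma> = max (lval t1 \<sigma>) (lval t2 \<sigma>)"
| "lval (LIMax t1 t2) \<sigma> = imax (lval t1 \<sigma>) (lval t2 \<sigma>)"

datatype sublevel = SA "var set" var nat | SB "var set" nat

fun sval :: "sublevel \<Rightarrow> valuation \<Rightarrow> nat" where
  "sval (SA E x S) \<sigma> = (if \<exists>y\<in>E. \<sigma> y = 0 then 0 else \<sigma> x + S)"
| "sval (SB E S) \<sigma> = (if \<exists>y\<in>E. \<sigma> y = 0 then 0 else S)"

fun in_Ls :: "sublevel \<Rightarrow> bool" where
  "in_Ls (SA E x S) = (finite E \<and> x \<in> E)"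
| "in_Ls (SB E S) = (finite E \<and> S > 0)"

definition sub_le :: "sublevel \<Rightarrow> sublevel \<Rightarrow> bool" where
  "sub_le u v = (\<forall>\<sigma>. sval u \<sigma> \<le> sval v \<sigma>)"

definition incomparable :: "sublevel \<Rightarrow> sublevel \<Rightarrow> bool" where
  "incomparable u v = (\<not> sub_le u v \<and> \<not> sub_le v u)"

definition maxval :: "sublevel set \<Rightarrow> valuation \<Rightarrow> nat" where
  "maxval U \<sigma> = Max (insert 0 ((\<lambda>u. sval u \<sigma>) ` U))"

definition in_Lr :: "sublevel set \<Rightarrow> bool" where
  "in_Lr U = (finite U \<and> (\<forall>u\<in>U. in_Ls u) \<and>
              (\<forall>u\<in>U. \<forall>v\<in>U. u \<noteq> v \<longrightarrow> incomparable u v))"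

end

theory Submission
  imports Defs
begin

fun vars :: "sublevel \<Rightarrow> var set" where
  "vars (SA E x S) = E"
| "vars (SB E S) = E"

fun bnd :: "sublevel \<Rightarrow> nat" where
  "bnd (SA E x S) = S"
| "bnd (SB E S) = S"

fun shiftS :: "sublevel \<Rightarrow> sublevel" where
  "shiftS (SA E x S) = SA E x (S+1)"
| "shiftS (SB E S) = SB E (S+1)"

fun addE :: "var set \<Rightarrow> sublevel \<Rightarrow> sublevel" where
  "addE F (SA E x S) = SA (F \<union> E) x S"
| "addE F (SB E S) = SB (F \<union> E) S"

lemma sval_zero_iff: "in_Ls w \<Longrightarrow> sval w \<sigma> = 0 \<longleftrightarrow> (\<exists>y\<in>vars w. \<sigma> y = 0)"
  by (cases w) auto

lemma sval_shift: "in_Ls w \<Longrightarrow> sval (shiftS w) \<sigma> = (if sval w \<sigma> = 0 then 0 else sval w \<sigma> + 1)"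
  by (cases w) auto

lemma in_Ls_shift: "in_Ls w \<Longrightarrow> in_Ls (shiftS w)"
  by (cases w) auto

lemma sval_addE: "sval (addE F w) \<sigma> = (if \<exists>y\<in>F. \<sigma> y = 0 then 0 else sval w \<sigma>)"
proof (cases w)
  case (SA E x S)
  show ?thesis unfolding SA addE.simps sval.simps bex_Un by presburger
next
  case (SB E S)
  show ?thesis unfolding SB addE.simps sval.simps bex_Un by presburger
qed

lemma in_Ls_addE: "in_Ls w \<Longrightarrow> finite F \<Longrightarrow> in_Ls (addE F w)"
  by (cases w) auto

lemma finite_vars: "in_Ls w \<Longrightarrow> finite (vars w)"
  by (cases w) auto

lemma maxval_le_iff: "finite W \<Longrightarrow> maxval W \<sigma> \<le> n \<longleftrightarrow> (\<forall>w\<in>W. sval w \<sigma> \<le> n)"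
  by (simp add: maxval_def)

lemma maxval_ge: "finite W \<Longrightarrow> w \<in> W \<Longrightarrow> sval w \<sigma> \<le> maxval W \<sigma>"
  by (simp add: maxval_def)

lemma maxval_attained: "finite W \<Longrightarrow> maxval W \<sigma> > 0 \<Longrightarrow> \<exists>w\<in>W. sval w \<sigma> = maxval W \<sigma>"
proof -
  assume f: "finite W" and p: "maxval W \<sigma> > 0"
  have "maxval W \<sigma> \<in> insert 0 ((\<lambda>u. sval u \<sigma>) ` W)"
    unfolding maxval_def using f by (intro Max_in) auto
  then show ?thesis using p by auto
qed

lemma exists_W: "\<exists>W. finite W \<and> (\<forall>w\<in>W. in_Ls w) \<and> (\<forall>\<sigma>. lval t \<sigma> = maxval W \<sigma>)"
proof (induction t)
  case (LVar x)
  show ?case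
    by (rule exI[of _ "{SA {x} x 0}"]) (simp add: maxval_def)
next
  case LZero
  show ?case
    by (rule exI[of _ "{}"]) (simp add: maxval_def)
next
  case (LSucc t)
  then obtain W where W: "finite W" "\<forall>w\<in>W. in_Ls w" "\<forall>\<sigma>. lval t \<sigma> = maxval W \<sigma>" by blast
  define W' where "W' = insert (SB {} 1) (shiftS ` W)"
  have fW': "finite W'" using W by (simp add: W'_def)
  have "lval (LSucc t) \<sigma> = maxval W' \<sigma>" for \<sigma>
  proof (rule antisym)
    show "maxval W' \<sigma> \<le> lval (LSucc t) \<sigma>"
      unfolding maxval_le_iff[OF fW'] using W maxval_ge[OF W(1)]
      by (auto simp: W'_def sval_shift)
  next
    show "lval (LSucc t) \<sigma> \<le> maxval W' \<sigma>"
    proof (cases "maxval W \<sigma> = 0")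
      case True
      then show ?thesis using W maxval_ge[OF fW', of "SB {} 1" \<sigma>] by (simp add: W'_def)
    next
      case False
      then obtain w where w: "w \<in> W" "sval w \<sigma> = maxval W \<sigma>" using maxval_attained[OF W(1)] by blast
      have "shiftS w \<in> W'" using w by (simp add: W'_def)
      from maxval_ge[OF fW' this, of \<sigma>] show ?thesis using w W False by (simp add: sval_shift)
    qed
  qed
  moreover have "\<forall>w\<in>W'. in_Ls w" using W in_Ls_shift by (auto simp: W'_def)
  ultimately show ?case using fW' by blast
next
  case (LMax t1 t2)
  then obtain W1 W2 where W1: "finite W1" "\<forall>w\<in>W1. in_Ls w" "\<forall>\<sigma>. lval t1 \<sigma> = maxval W1 \<sigma>"
    and W2: "finite W2" "\<forall>w\<in>W2. in_Ls w" "\<forall>\<sigma>. lval t2 \<sigma> = maxval W2 \<sigma>" by blast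
  define W' where "W' = W1 \<union> W2"
  have fW': "finite W'" using W1 W2 by (simp add: W'_def)
  have "lval (LMax t1 t2) \<sigma> = maxval W' \<sigma>" for \<sigma>
  proof (rule antisym)
    show "maxval W' \<sigma> \<le> lval (LMax t1 t2) \<sigma>"
      unfolding maxval_le_iff[OF fW'] using W1 W2 maxval_ge[OF W1(1)] maxval_ge[OF W2(1)]
      by (fastforce simp: W'_def le_max_iff_disj)
  next
    have "maxval W1 \<sigma> \<le> maxval W' \<sigma>" "maxval W2 \<sigma> \<le> maxval W' \<sigma>"
      using maxval_le_iff[OF W1(1)] maxval_le_iff[OF W2(1)] maxval_ge[OF fW'] by (auto simp: W'_def)
    then show "lval (LMax t1 t2) \<sigma> \<le> maxval W' \<sigma>" using W1 W2 by simp
  qed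
  moreover have "\<forall>w\<in>W'. in_Ls w" using W1 W2 by (auto simp: W'_def)
  ultimately show ?case using fW' by blast
next
  case (LIMax t1 t2)
  then obtain W1 W2 where W1: "finite W1" "\<forall>w\<in>W1. in_Ls w" "\<forall>\<sigma>. lval t1 \<sigma> = maxval W1 \<sigma>"
    and W2: "finite W2" "\<forall>w\<in>W2. in_Ls w" "\<forall>\<sigma>. lval t2 \<sigma> = maxval W2 \<sigma>" by blast
  define W' where "W' = W2 \<union> (\<lambda>p. addE (vars (snd p)) (fst p)) ` (W1 \<times> W2)"
  have fW': "finite W'" using W1 W2 by (simp add: W'_def)
  have "lval (LIMax t1 t2) \<sigma> = maxval W' \<sigma>" for \<sigma>
  proof (cases "maxval W2 \<sigma> = 0")
    case True
    then have z: "\<forall>w\<in>W2. sval w \<sigma> = 0" using maxval_ge[OF W2(1), of _ \<sigma>] by fastforce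
    then have "\<forall>w\<in>W2. \<exists>y\<in>vars w. \<sigma> y = 0" using W2(2) sval_zero_iff by blast
    then have "maxval W' \<sigma> \<le> 0"
      unfolding maxval_le_iff[OF fW'] using z by (auto simp: W'_def sval_addE)
    then show ?thesis using True W2 by (simp add: imax_def)
  next
    case False
    then obtain w2 where w2: "w2 \<in> W2" "sval w2 \<sigma> = maxval W2 \<sigma>" using maxval_attained[OF W2(1)] by blast
    have nz: "\<not> (\<exists>y\<in>vars w2. \<sigma> y = 0)" using sval_zero_iff[of w2 \<sigma>] W2(2) w2 False by auto
    have "lval (LIMax t1 t2) \<sigma> = max (maxval W1 \<sigma>) (maxval W2 \<sigma>)"
      using W1 W2 False by (simp add: imax_def)
    also have "\<dots> = maxval W' \<sigma>"
    proof (rule antisym)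
      show "maxval W' \<sigma> \<le> max (maxval W1 \<sigma>) (maxval W2 \<sigma>)"
        unfolding maxval_le_iff[OF fW'] using maxval_ge[OF W1(1), of _ \<sigma>] maxval_ge[OF W2(1), of _ \<sigma>]
        by (auto simp: W'_def sval_addE le_max_iff_disj)
    next
      have a: "maxval W2 \<sigma> \<le> maxval W' \<sigma>" using w2 maxval_ge[OF fW', of w2 \<sigma>] by (simp add: W'_def)
      have b: "maxval W1 \<sigma> \<le> maxval W' \<sigma>"
      proof (cases "maxval W1 \<sigma> = 0")
        case False
        then obtain w1 where w1: "w1 \<in> W1" "sval w1 \<sigma> = maxval W1 \<sigma>" using maxval_attained[OF W1(1)] by blast
        have "addE (vars w2) w1 \<in> W'" using w1 w2 by (force simp: W'_def)
        from maxval_ge[OF fW' this, of \<sigma>] show ?thesis using nz w1 by (simp add: sval_addE)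
      qed simp
      show "max (maxval W1 \<sigma>) (maxval W2 \<sigma>) \<le> maxval W' \<sigma>" using a b by simp
    qed
    finally show ?thesis .
  qed
  moreover have "\<forall>w\<in>W'. in_Ls w" using W1 W2 in_Ls_addE finite_vars by (auto simp: W'_def)
  ultimately show ?case using fW' by blast
qed

definition witA :: "var set \<Rightarrow> var \<Rightarrow> nat \<Rightarrow> valuation" where
  "witA E x N = (\<lambda>y. if y = x then N else if y \<in> E then 1 else 0)"

definition witB :: "var set \<Rightarrow> valuation" where
  "witB E = (\<lambda>y. if y \<in> E then 1 else 0)"

lemma witA_out: "y \<notin> E \<Longrightarrow> x \<in> E \<Longrightarrow> witA E x N y = 0"
  unfolding witA_def by auto

lemma witA_x: "witA E x N x = N"
  unfolding witA_def by auto

lemma witA_other: "y \<noteq> x \<Longrightarrow> y \<in> E \<Longrightarrow> witA E x N y = 1"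
  unfolding witA_def by auto

lemma witA_nz: "N > 0 \<Longrightarrow> (\<exists>y\<in>E. witA E x N y = 0) = False"
  unfolding witA_def by auto

lemma witB_out: "y \<notin> E \<Longrightarrow> witB E y = 0"
  unfolding witB_def by auto

lemma witB_in: "y \<in> E \<Longrightarrow> witB E y = 1"
  unfolding witB_def by auto

lemma witB_nz: "(\<exists>y\<in>E. witB E y = 0) = False"
  unfolding witB_def by auto

lemma nz_of_pos:
  assumes v: "in_Ls v" and pos: "sval v \<sigma> > 0"
  shows "(\<exists>y\<in>vars v. \<sigma> y = 0) = False"
  using sval_zero_iff[OF v, of \<sigma>] pos by (metis less_irrefl)

lemma key_A:
  assumes xE: "x \<in> E" and v: "in_Ls v" and N: "bnd v + 2 \<le> N"
    and le: "N + S \<le> sval v (witA E x N)"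
  shows "\<exists>E' S'. v = SA E' x S' \<and> E' \<subseteq> E \<and> S \<le> S'"
proof -
  define \<sigma> where "\<sigma> = witA E x N"
  have pos: "sval v \<sigma> > 0" using le N unfolding \<sigma>_def by simp
  have nz: "(\<exists>y\<in>vars v. \<sigma> y = 0) = False" using nz_of_pos[OF v pos] .
  have sub: "vars v \<subseteq> E"
  proof
    fix y assume y: "y \<in> vars v"
    show "y \<in> E"
    proof (rule ccontr)
      assume "y \<notin> E"
      then have "\<sigma> y = 0" using witA_out xE unfolding \<sigma>_def by blast
      then show False using nz y by blast
    qed
  qed
  show ?thesis
  proof (cases v)
    case (SA E' x' S')
    have nz': "(\<exists>y\<in>E'. \<sigma> y = 0) = False" using nz SA by simp
    have val: "sval v \<sigma> = \<sigma> x' + S'" by (simp only: SA sval.simps nz' if_False)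
    have x'E: "x' \<in> E" using sub SA v by auto
    have "x' = x"
    proof (rule ccontr)
      assume "x' \<noteq> x"
      then have "\<sigma> x' = 1" using witA_other x'E unfolding \<sigma>_def by blast
      then show False using val le N SA unfolding \<sigma>_def by simp
    qed
    then have "\<sigma> x' = N" using witA_x unfolding \<sigma>_def by simp
    then have "S \<le> S'" using val le unfolding \<sigma>_def by simp
    then show ?thesis using SA sub \<open>x' = x\<close> by auto
  next
    case (SB E' S')
    have "sval v \<sigma> \<le> S'" using SB by simp
    then show ?thesis using le N SB unfolding \<sigma>_def by simp
  qed
qed

lemma key_B:
  assumes v: "in_Ls v" and Spos: "S > 0" and le: "S \<le> sval v (witB E)"
  shows "vars v \<subseteq> E \<and> (case v of SB _ S' \<Rightarrow> S \<le> S' | SA _ _ S' \<Rightarrow> S \<le> S' + 1)"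
proof -
  define \<sigma> where "\<sigma> = witB E"
  have pos: "sval v \<sigma> > 0" using le Spos unfolding \<sigma>_def by simp
  have nz: "(\<exists>y\<in>vars v. \<sigma> y = 0) = False" using nz_of_pos[OF v pos] .
  have sub: "vars v \<subseteq> E"
  proof
    fix y assume y: "y \<in> vars v"
    show "y \<in> E"
    proof (rule ccontr)
      assume "y \<notin> E"
      then have "\<sigma> y = 0" using witB_out unfolding \<sigma>_def by blast
      then show False using nz y by blast
    qed
  qed
  show ?thesis
  proof (cases v)
    case (SA E' x' S')
    have nz': "(\<exists>y\<in>E'. \<sigma> y = 0) = False" using nz SA by simp
    have val: "sval v \<sigma> = \<sigma> x' + S'" by (simp only: SA sval.simps nz' if_False)
    have x'E: "x' \<in> E" using sub SA v by auto
    then have "\<sigma> x' = 1" using witB_in unfolding \<sigma>_def by blast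
    then show ?thesis using SA sub val le unfolding \<sigma>_def by simp
  next
    case (SB E' S')
    have nz': "(\<exists>y\<in>E'. \<sigma> y = 0) = False" using nz SB by simp
    have val: "sval v \<sigma> = S'" by (simp only: SB sval.simps nz' if_False)
    then show ?thesis using SB sub le unfolding \<sigma>_def by simp
  qed
qed

lemma suffA:
  assumes sub: "E' \<subseteq> E" and S: "S \<le> S'"
  shows "sub_le (SA E x S) (SA E' x S')"
  unfolding sub_le_def
proof
  fix \<sigma>
  show "sval (SA E x S) \<sigma> \<le> sval (SA E' x S') \<sigma>"
  proof (cases "\<exists>y\<in>E. \<sigma> y = 0")
    case True
    then show ?thesis by simp
  next
    case False
    then have nz: "(\<exists>y\<in>E'. \<sigma> y = 0) = False" using sub by blast
    have "sval (SA E' x S') \<sigma> = \<sigma> x + S'" by (simp only: sval.simps nz if_False)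
    moreover have "sval (SA E x S) \<sigma> = \<sigma> x + S"
      using False by (simp only: sval.simps if_False)
    ultimately show ?thesis using S by simp
  qed
qed

lemma suffB:
  assumes v: "in_Ls v" and sub: "vars v \<subseteq> E"
    and c: "case v of SB _ S' \<Rightarrow> S \<le> S' | SA _ _ S' \<Rightarrow> S \<le> S' + 1"
  shows "sub_le (SB E S) v"
  unfolding sub_le_def
proof
  fix \<sigma>
  show "sval (SB E S) \<sigma> \<le> sval v \<sigma>"
  proof (cases "\<exists>y\<in>E. \<sigma> y = 0")
    case True
    then show ?thesis by simp
  next
    case False
    then have nz: "(\<exists>y\<in>vars v. \<sigma> y = 0) = False" using sub by blast
    show ?thesis
    proof (cases v)
      case (SA E' x' S')
      have nz': "(\<exists>y\<in>E'. \<sigma> y = 0) = False" using nz SA by simp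
      have val: "sval v \<sigma> = \<sigma> x' + S'" by (simp only: SA sval.simps nz' if_False)
      have "x' \<in> E'" using SA v by simp
      moreover have "\<not> (\<exists>y\<in>E'. \<sigma> y = 0)" using nz' by simp
      ultimately have "\<sigma> x' \<noteq> 0" by metis
      then show ?thesis using val c SA False by simp
    next
      case (SB E' S')
      have nz': "(\<exists>y\<in>E'. \<sigma> y = 0) = False" using nz SB by simp
      have val: "sval v \<sigma> = S'" by (simp only: SB sval.simps nz' if_False)
      then show ?thesis using c SB False by simp
    qed
  qed
qed

lemma sub_le_trans: "sub_le u v \<Longrightarrow> sub_le v w \<Longrightarrow> sub_le u w"
  unfolding sub_le_def using le_trans by blast

lemma key_A_sub:
  assumes u: "in_Ls (SA E x S)" and v: "in_Ls v" and uv: "sub_le (SA E x S) v"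
  shows "\<exists>E' S'. v = SA E' x S' \<and> E' \<subseteq> E \<and> S \<le> S'"
proof -
  define N where "N = bnd v + 2"
  have "N > 0" unfolding N_def by simp
  then have "sval (SA E x S) (witA E x N) = N + S" by (simp add: witA_nz witA_x)
  moreover have "sval (SA E x S) (witA E x N) \<le> sval v (witA E x N)"
    using uv unfolding sub_le_def by blast
  ultimately have "N + S \<le> sval v (witA E x N)" by simp
  moreover have "x \<in> E" using u by simp
  ultimately show ?thesis using key_A[OF _ v] unfolding N_def by blast
qed

lemma key_B_sub:
  assumes u: "in_Ls (SB E S)" and v: "in_Ls v" and uv: "sub_le (SB E S) v"
  shows "vars v \<subseteq> E \<and> (case v of SB _ S' \<Rightarrow> S \<le> S' | SA _ _ S' \<Rightarrow> S \<le> S' + 1)"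
proof -
  have "sval (SB E S) (witB E) = S" by (simp add: witB_nz)
  moreover have "sval (SB E S) (witB E) \<le> sval v (witB E)"
    using uv unfolding sub_le_def by blast
  ultimately have "S \<le> sval v (witB E)" by simp
  moreover have "S > 0" using u by simp
  ultimately show ?thesis using key_B[OF v] by blast
qed

lemma antisym_sub:
  assumes u: "in_Ls u" and v: "in_Ls v" and uv: "sub_le u v" and vu: "sub_le v u"
  shows "u = v"
proof (cases u)
  case (SA E x S)
  obtain E' S' where v': "v = SA E' x S'" "E' \<subseteq> E" "S \<le> S'"
    using key_A_sub[OF u[unfolded SA] v] uv SA by blast
  obtain E'' S'' where u': "u = SA E'' x S''" "E'' \<subseteq> E'" "S' \<le> S''"
    using key_A_sub[OF v[unfolded v'(1)] u] vu v' by blast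
  show ?thesis using SA v' u' by auto
next
  case (SB E S)
  show ?thesis
  proof (cases v)
    case (SA E' x' S')
    obtain E'' S'' where "u = SA E'' x' S''"
      using key_A_sub[OF v[unfolded SA] u] vu SA by blast
    then show ?thesis using SB by simp
  next
    case SB2: (SB E' S')
    have a: "vars v \<subseteq> E \<and> S \<le> S'"
      using key_B_sub[OF u[unfolded SB] v] uv SB SB2 by simp
    have b: "vars u \<subseteq> E' \<and> S' \<le> S"
      using key_B_sub[OF v[unfolded SB2] u] vu SB SB2 by simp
    show ?thesis using a b SB SB2 by auto
  qed
qed

lemma join_prime:
  assumes u: "in_Ls u" and fV: "finite V" and V: "\<forall>v\<in>V. in_Ls v"
    and le: "\<forall>\<sigma>. sval u \<sigma> \<le> maxval V \<sigma>"
  shows "\<exists>v\<in>V. sub_le u v"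
proof (cases u)
  case (SA E x S)
  define N where "N = Max (insert 0 (bnd ` V)) + 2"
  define \<sigma> where "\<sigma> = witA E x N"
  have Npos: "N > 0" unfolding N_def by simp
  have "sval u \<sigma> = N + S" using Npos SA unfolding \<sigma>_def by (simp add: witA_nz witA_x)
  then have ge: "N + S \<le> maxval V \<sigma>" using le by metis
  then have "maxval V \<sigma> > 0" using Npos by simp
  then obtain v where v: "v \<in> V" "sval v \<sigma> = maxval V \<sigma>"
    using maxval_attained[OF fV] by blast
  have "bnd v + 2 \<le> N" using v fV unfolding N_def by simp
  moreover have "x \<in> E" using u SA by simp
  moreover have "in_Ls v" using V v by blast
  ultimately obtain E' S' where "v = SA E' x S'" "E' \<subseteq> E" "S \<le> S'"
    using key_A[of x E v N S] v ge unfolding \<sigma>_def by auto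
  then have "sub_le u v" using SA suffA by simp
  then show ?thesis using v by blast
next
  case (SB E S)
  define \<sigma> where "\<sigma> = witB E"
  have "sval u \<sigma> = S" using SB unfolding \<sigma>_def by (simp add: witB_nz)
  then have ge: "S \<le> maxval V \<sigma>" using le by metis
  have Spos: "S > 0" using u SB by simp
  then have "maxval V \<sigma> > 0" using ge by simp
  then obtain v where v: "v \<in> V" "sval v \<sigma> = maxval V \<sigma>"
    using maxval_attained[OF fV] by blast
  have vL: "in_Ls v" using V v by blast
  have "S \<le> sval v (witB E)" using v ge unfolding \<sigma>_def by simp
  from key_B[OF vL Spos this]
  have "vars v \<subseteq> E \<and> (case v of SB _ S' \<Rightarrow> S \<le> S' | SA _ _ S' \<Rightarrow> S \<le> S' + 1)" .
  then have "sub_le u v" using suffB[OF vL] SB by blast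
  then show ?thesis using v by blast
qed

lemma sub_le_refl: "sub_le u u"
  unfolding sub_le_def by simp

lemma max_above:
  assumes "finite W"
  shows "(\<forall>w\<in>W. in_Ls w) \<Longrightarrow> w \<in> W \<Longrightarrow> \<exists>m\<in>W. sub_le w m \<and> (\<forall>w'\<in>W. sub_le m w' \<longrightarrow> w' = m)"
  using assms
proof (induction W arbitrary: w rule: finite_induct)
  case empty
  then show ?case by simp
next
  case (insert a W)
  have L: "\<forall>w\<in>W. in_Ls w" "in_Ls a" using insert.prems by auto
  show ?case
  proof (cases "w \<in> W")
    case True
    obtain m where m: "m \<in> W" "sub_le w m" "\<forall>w'\<in>W. sub_le m w' \<longrightarrow> w' = m"
      using insert.IH[OF L(1) True] by blast
    show ?thesis
    proof (cases "sub_le m a \<and> a \<noteq> m")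
      case True
      have "\<forall>w'\<in>insert a W. sub_le a w' \<longrightarrow> w' = a"
      proof (intro ballI impI)
        fix w' assume w': "w' \<in> insert a W" "sub_le a w'"
        show "w' = a"
        proof (rule ccontr)
          assume ne: "w' \<noteq> a"
          then have "w' \<in> W" using w' by simp
          moreover have "sub_le m w'" using True w' sub_le_trans by blast
          ultimately have "w' = m" using m by blast
          then have "sub_le a m" using w' by simp
          then have "a = m" using antisym_sub[OF L(2)] True m L(1) by blast
          then show False using True by simp
        qed
      qed
      moreover have "sub_le w a" using m True sub_le_trans by blast
      ultimately show ?thesis by blast
    next
      case False
      have "\<forall>w'\<in>insert a W. sub_le m w' \<longrightarrow> w' = m"
        using m False by auto
      then show ?thesis using m by blast
    qed
  next
    case False
    then have wa: "w = a" using insert.prems by simp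
    show ?thesis
    proof (cases "\<exists>w0\<in>W. sub_le a w0")
      case True
      then obtain w0 where w0: "w0 \<in> W" "sub_le a w0" by blast
      obtain m where m: "m \<in> W" "sub_le w0 m" "\<forall>w'\<in>W. sub_le m w' \<longrightarrow> w' = m"
        using insert.IH[OF L(1) w0(1)] by blast
      have am: "sub_le a m" using w0 m sub_le_trans by blast
      have "\<forall>w'\<in>insert a W. sub_le m w' \<longrightarrow> w' = m"
      proof (intro ballI impI)
        fix w' assume w': "w' \<in> insert a W" "sub_le m w'"
        show "w' = m"
        proof (cases "w' = a")
          case True
          then show ?thesis using antisym_sub[OF L(2)] am w' m L(1) by metis
        next
          case False
          then show ?thesis using w' m by simp
        qed
      qed
      then show ?thesis using m am wa by blast
    next
      case False
      have "\<forall>w'\<in>insert a W. sub_le a w' \<longrightarrow> w' = a" using False by auto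
      then show ?thesis using wa sub_le_refl by blast
    qed
  qed
qed

lemma unique_sub:
  assumes U: "in_Lr U" and V: "in_Lr V" and eq: "\<forall>\<sigma>. maxval U \<sigma> = maxval V \<sigma>"
  shows "U \<subseteq> V"
proof
  fix u assume u: "u \<in> U"
  have fU: "finite U" "\<forall>w\<in>U. in_Ls w" using U unfolding in_Lr_def by auto
  have fV: "finite V" "\<forall>w\<in>V. in_Ls w" using V unfolding in_Lr_def by auto
  have "\<forall>\<sigma>. sval u \<sigma> \<le> maxval V \<sigma>" using maxval_ge[OF fU(1) u] eq by metis
  then obtain v where v: "v \<in> V" "sub_le u v" using join_prime[OF _ fV] fU u by blast
  have "\<forall>\<sigma>. sval v \<sigma> \<le> maxval U \<sigma>" using maxval_ge[OF fV(1) v(1)] eq by metis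
  then obtain u' where u': "u' \<in> U" "sub_le v u'" using join_prime[OF _ fU] fV v by blast
  have "sub_le u u'" using v u' sub_le_trans by blast
  then have "u = u'" using U u u' unfolding in_Lr_def incomparable_def by blast
  then have "u = v" using antisym_sub v u' fU fV u by blast
  then show "u \<in> V" using v by simp
qed

theorem theorem35:
  shows "\<forall>t :: level. \<exists>!U. in_Lr U \<and> (\<forall>\<sigma>. lval t \<sigma> = maxval U \<sigma>)"
proof
  fix t :: level
  obtain W where W: "finite W" "\<forall>w\<in>W. in_Ls w" "\<forall>\<sigma>. lval t \<sigma> = maxval W \<sigma>"
    using exists_W by blast
  define U where "U = {w\<in>W. \<forall>w'\<in>W. sub_le w w' \<longrightarrow> w' = w}"
  have fU: "finite U" using W(1) unfolding U_def by simp
  have UW: "U \<subseteq> W" unfolding U_def by blast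
  have inU: "in_Lr U"
    unfolding in_Lr_def incomparable_def
  proof (intro conjI ballI impI)
    show "finite U" by (rule fU)
  next
    fix u assume "u \<in> U" then show "in_Ls u" using UW W(2) by blast
  next
    fix u v assume uv: "u \<in> U" "v \<in> U" "u \<noteq> v"
    show "\<not> sub_le u v"
      using uv UW unfolding U_def by blast
  next
    fix u v assume uv: "u \<in> U" "v \<in> U" "u \<noteq> v"
    show "\<not> sub_le v u"
      using uv UW unfolding U_def by blast
  qed
  have val: "lval t \<sigma> = maxval U \<sigma>" for \<sigma>
  proof -
    have "maxval U \<sigma> \<le> maxval W \<sigma>"
      unfolding maxval_le_iff[OF fU] using UW maxval_ge[OF W(1)] by blast
    moreover have "maxval W \<sigma> \<le> maxval U \<sigma>"
      unfolding maxval_le_iff[OF W(1)]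
    proof
      fix w assume w: "w \<in> W"
      obtain m where m: "m \<in> W" "sub_le w m" "\<forall>w'\<in>W. sub_le m w' \<longrightarrow> w' = m"
        using max_above[OF W(1) W(2) w] by blast
      then have "m \<in> U" unfolding U_def by blast
      then have "sval m \<sigma> \<le> maxval U \<sigma>" using maxval_ge[OF fU] by blast
      moreover have "sval w \<sigma> \<le> sval m \<sigma>" using m unfolding sub_le_def by blast
      ultimately show "sval w \<sigma> \<le> maxval U \<sigma>" by simp
    qed
    ultimately show ?thesis using W(3) by simp
  qed
  show "\<exists>!U. in_Lr U \<and> (\<forall>\<sigma>. lval t \<sigma> = maxval U \<sigma>)"
  proof (rule ex1I[of _ U])
    show "in_Lr U \<and> (\<forall>\<sigma>. lval t \<sigma> = maxval U \<sigma>)" using inU val by blast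
  next
    fix V assume V: "in_Lr V \<and> (\<forall>\<sigma>. lval t \<sigma> = maxval V \<sigma>)"
    then have eq: "\<forall>\<sigma>. maxval U \<sigma> = maxval V \<sigma>" using val by simp
    have "U \<subseteq> V" using unique_sub[OF inU _ eq] V by blast
    moreover have "V \<subseteq> U" using unique_sub[OF _ inU] eq V by metis
    ultimately show "V = U" by blast
  qed
qed

end
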